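(* Let $\lambda$ be a partition of $n$ and $\lambda'$ its conjugate partition. Then for every integer $m$, $$|\mathrm{QYT}_{=m}(\lambda)|=|\mathrm{QYT}_{=(n+1)-m}(\lambda')|.$$
   Context: A partition $\lambda=(\lambda_1\ge\cdots\ge\lambda_k>0)$ of $n$ has (French) Young diagram with $\lambda_j$ left-justified boxes in row $j$, rows numbered from bottom to top; the conjugate partition $\lambda'$ is the partition whose diagram is obtained by reflecting that of $\lambda$ across the main diagonal (so $\lambda'_i$ is the number of boxes in column $i$ of $\lambda$). A semistandard Young tableau (SSYT) of shape $\lambda$ is a filling of the boxes with positive integers weakly increasing left to right along rows and strictly increasing bottom to top along columns. An SSYT $T$ is quasi-Yamanouchi if for every integer $i>1$ appearing in $T$, the leftmost occurrence of $i$ lies in a column weakly left of (column index $\le$) some occurrence of $i-1$. $\mathrm{QYT}_{=m}(\lambda)$ is the set of quasi-Yamanouchi tableaux of shape $\lambda$ whose largest entry is exactly $m$. *)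

theory Defs
  imports Main
begin

definition is_partition :: "nat list \<Rightarrow> bool" where
  "is_partition lam \<longleftrightarrow> sorted_wrt (\<ge>) lam \<and> (\<forall>x\<in>set lam. 0 < x)"

definition partition_of :: "nat list \<Rightarrow> nat \<Rightarrow> bool" where
  "partition_of lam n \<longleftrightarrow> is_partition lam \<and> sum_list lam = n"

definition conj_part :: "nat list \<Rightarrow> nat list" where
  "conj_part lam = map (\<lambda>i. length (filter (\<lambda>x. i \<le> x) lam)) [1..<Suc (fold max lam 0)]"

text \<open>Young diagram (French convention), 1-based cells (column, row):
  row j (from the bottom) contains the columns 1..lambda_j.\<close>
definition diagram :: "nat list \<Rightarrow> (nat \<times> nat) set" where
  "diagram lam = {(i, j). 1 \<le> j \<and> j \<le> length lam \<and> 1 \<le> i \<and> i \<le> lam ! (j - 1)}"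

definition is_SSYT :: "nat list \<Rightarrow> (nat \<times> nat \<Rightarrow> nat) \<Rightarrow> bool" where
  "is_SSYT lam T \<longleftrightarrow>
     (\<forall>c. c \<notin> diagram lam \<longrightarrow> T c = 0) \<and>
     (\<forall>c\<in>diagram lam. 0 < T c) \<and>
     (\<forall>i i' j. (i, j) \<in> diagram lam \<longrightarrow> (i', j) \<in> diagram lam \<longrightarrow> i \<le> i' \<longrightarrow> T (i, j) \<le> T (i', j)) \<and>
     (\<forall>i j j'. (i, j) \<in> diagram lam \<longrightarrow> (i, j') \<in> diagram lam \<longrightarrow> j < j' \<longrightarrow> T (i, j) < T (i, j'))"

definition leftmost_col :: "nat list \<Rightarrow> (nat \<times> nat \<Rightarrow> nat) \<Rightarrow> nat \<Rightarrow> nat" where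
  "leftmost_col lam T k = Min {i. \<exists>j. (i, j) \<in> diagram lam \<and> T (i, j) = k}"

definition quasi_yamanouchi :: "nat list \<Rightarrow> (nat \<times> nat \<Rightarrow> nat) \<Rightarrow> bool" where
  "quasi_yamanouchi lam T \<longleftrightarrow> is_SSYT lam T \<and>
     (\<forall>k\<in>T ` diagram lam. 1 < k \<longrightarrow>
        (\<exists>(i', j')\<in>diagram lam. T (i', j') = k - 1 \<and> leftmost_col lam T k \<le> i'))"

definition QYT_eq :: "int \<Rightarrow> nat list \<Rightarrow> (nat \<times> nat \<Rightarrow> nat) set" where
  "QYT_eq m lam = {T. quasi_yamanouchi lam T \<and>
      (\<exists>c\<in>diagram lam. int (T c) = m) \<and> (\<forall>c\<in>diagram lam. int (T c) \<le> m)}"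

end

theory Submission imports Defs "HOL-Library.Product_Lexorder" begin


definition ideal :: "(nat\<times>nat) set \<Rightarrow> bool" where
 "ideal D \<longleftrightarrow> finite D \<and> (\<forall>i j. (i,j)\<in>D \<longrightarrow> 1 \<le> i \<and> 1 \<le> j) \<and>
   (\<forall>i j i' j'. (i,j)\<in>D \<longrightarrow> 1\<le>i' \<longrightarrow> 1\<le>j' \<longrightarrow> i'\<le>i \<longrightarrow> j'\<le>j \<longrightarrow> (i',j')\<in>D)"

lemma fold_max_ge: "a \<le> fold max xs (a::nat) \<and> (\<forall>x\<in>set xs. x \<le> fold max xs a)"
proof (induction xs arbitrary: a)
  case Nil then show ?case by simp
next
  case (Cons x xs)
  have h: "max x a \<le> fold max xs (max x a) \<and> (\<forall>y\<in>set xs. y \<le> fold max xs (max x a))"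
    by (rule Cons.IH)
  have e: "fold max (x#xs) a = fold max xs (max x a)" by simp
  have 1: "a \<le> fold max xs (max x a)" using h by (meson le_trans max.cobounded2)
  have 2: "x \<le> fold max xs (max x a)" using h by (meson le_trans max.cobounded1)
  show ?case unfolding e using 1 2 h by simp
qed

lemma mem_swap: "(i,j) \<in> prod.swap ` D \<longleftrightarrow> (j,i) \<in> D"
proof
  assume "(i,j) \<in> prod.swap ` D"
  then obtain x where "x\<in>D" "(i,j) = prod.swap x" by blast
  then show "(j,i)\<in>D" by (cases x) auto
next
  assume "(j,i)\<in>D"
  then have "prod.swap (j,i) \<in> prod.swap ` D" by blast
  then show "(i,j) \<in> prod.swap ` D" by simp
qed

lemma sorted_nth_le_hd: "sorted_wrt (\<ge>) (x#xs) \<Longrightarrow> k < length (x#xs) \<Longrightarrow> (x#xs)!k \<le> (x::nat)"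
  by (cases k) auto

lemma filter_len_iff:
  assumes "sorted_wrt (\<ge>) (lam::nat list)" "1 \<le> i"
  shows "i \<le> length (filter (\<lambda>x. j \<le> x) lam) \<longleftrightarrow> i \<le> length lam \<and> j \<le> lam ! (i - 1)"
  using assms
proof (induction lam arbitrary: i)
  case Nil then show ?case by simp
next
  case (Cons x xs)
  show ?case
  proof (cases "j \<le> x")
    case True
    show ?thesis
    proof (cases "i = 1")
      case True with \<open>j \<le> x\<close> show ?thesis by simp
    next
      case False
      then have "1 \<le> i - 1" using Cons.prems by simp
      from Cons.IH[OF _ this] Cons.prems(1) have "i - 1 \<le> length (filter (\<lambda>x. j \<le> x) xs) \<longleftrightarrow>
         i - 1 \<le> length xs \<and> j \<le> xs ! (i - 1 - 1)" by simp
      moreover have "(x#xs) ! (i-1) = xs ! (i - 1 - 1)" using False Cons.prems by (cases i) auto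
      ultimately show ?thesis using True False Cons.prems by auto
    qed
  next
    case False
    have "filter (\<lambda>x. j \<le> x) xs = []" using Cons.prems(1) False by (auto simp: filter_empty_conv)
    moreover have "i \<le> length (x#xs) \<Longrightarrow> (x#xs) ! (i-1) \<le> x"
      using sorted_nth_le_hd[OF Cons.prems(1)] Cons.prems(2) by simp
    ultimately show ?thesis using False Cons.prems(2) by auto
  qed
qed

lemma diagram_conj:
  assumes "is_partition lam"
  shows "diagram (conj_part lam) = prod.swap ` diagram lam"
proof -
  have s: "sorted_wrt (\<ge>) lam" using assms by (simp add: is_partition_def)
  have "(i,j) \<in> diagram (conj_part lam) \<longleftrightarrow> (j,i) \<in> diagram lam" for i j
  proof -
    have len: "length (conj_part lam) = fold max lam 0" by (simp add: conj_part_def)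
    have nth: "1 \<le> j \<Longrightarrow> j \<le> fold max lam 0 \<Longrightarrow> conj_part lam ! (j-1) = length (filter (\<lambda>x. j \<le> x) lam)"
      unfolding conj_part_def by (subst nth_map) (auto simp del: upt_Suc)
    have A: "(i,j) \<in> diagram (conj_part lam) \<longleftrightarrow> 1 \<le> j \<and> j \<le> fold max lam 0 \<and> 1 \<le> i \<and>
       i \<le> length (filter (\<lambda>x. j \<le> x) lam)"
      using len nth by (auto simp: diagram_def)
    show ?thesis
    proof (cases "1 \<le> i \<and> 1 \<le> j")
      case True
      have "(j,i) \<in> diagram lam \<longleftrightarrow> i \<le> length lam \<and> j \<le> lam ! (i-1)"
        using True by (auto simp: diagram_def)
      moreover have "i \<le> length lam \<Longrightarrow> lam ! (i-1) \<le> fold max lam 0"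
      proof -
        assume a: "i \<le> length lam"
        have "1 \<le> i" using True by simp
        then have "i - 1 < length lam" using a by linarith
        then have "lam ! (i-1) \<in> set lam" by (rule nth_mem)
        then show ?thesis using fold_max_ge[of 0 lam] by blast
      qed
      ultimately show ?thesis using A filter_len_iff[OF s, of i j] True by auto
    next
      case False then show ?thesis using A by (auto simp: diagram_def)
    qed
  qed
  then show ?thesis by (auto simp: mem_swap)
qed

lemma diagram_Cons: "diagram (x#xs) = {(i,1) | i. 1 \<le> i \<and> i \<le> x} \<union> (\<lambda>(i,j). (i, Suc j)) ` diagram xs"
proof -
  have "c \<in> diagram (x#xs) \<longleftrightarrow> c \<in> {(i,1) | i. 1 \<le> i \<and> i \<le> x} \<union> (\<lambda>(i,j). (i, Suc j)) ` diagram xs" for c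
  proof (cases c)
    case (Pair i j)
    show ?thesis
    proof (cases j)
      case 0 then show ?thesis using Pair by (auto simp: diagram_def)
    next
      case (Suc k)
      then show ?thesis using Pair by (cases k) (auto simp: diagram_def image_iff nth_Cons')
    qed
  qed
  then show ?thesis by blast
qed

lemma diagram_finite_card: "finite (diagram lam) \<and> card (diagram lam) = sum_list lam"
proof (induction lam)
  case Nil
  have "diagram [] = {}" by (auto simp: diagram_def)
  then show ?case by simp
next
  case (Cons x xs)
  have inj: "inj (\<lambda>(i,j). (i, Suc (j::nat)))" by (auto simp: inj_def)
  have e: "{(i,1) | i. 1 \<le> i \<and> i \<le> x} = (\<lambda>i. (i,1::nat)) ` {1..x}" by auto
  have fin1: "finite {(i,1::nat) | i. 1 \<le> i \<and> i \<le> x}" unfolding e by simp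
  have c1: "card {(i,1::nat) | i. 1 \<le> i \<and> i \<le> x} = x" unfolding e by (simp add: card_image inj_on_def)
  have disj: "{(i,1::nat) | i. 1 \<le> i \<and> i \<le> x} \<inter> (\<lambda>(i,j). (i, Suc j)) ` diagram xs = {}"
    by (auto simp: diagram_def)
  have "card ((\<lambda>(i,j). (i, Suc j)) ` diagram xs) = card (diagram xs)"
    by (rule card_image) (metis inj inj_on_subset subset_UNIV)
  then show ?case using Cons fin1 c1 disj by (simp add: diagram_Cons card_Un_disjoint)
qed

lemma ideal_diagram:
  assumes "is_partition lam"
  shows "ideal (diagram lam)"
proof -
  have s: "sorted_wrt (\<ge>) lam" using assms by (simp add: is_partition_def)
  have mono: "lam ! (j'-1) \<ge> lam ! (j-1)" if "1 \<le> j'" "j' \<le> j" "j \<le> length lam" for j j'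
  proof (cases "j' = j")
    case False
    then have "j' - 1 < j - 1" "j - 1 < length lam" using that by auto
    then show ?thesis using s by (simp add: sorted_wrt_iff_nth_less)
  qed simp
  show ?thesis unfolding ideal_def
  proof (intro conjI allI impI)
    show "finite (diagram lam)" using diagram_finite_card[of lam] by simp
    fix i j assume "(i,j) \<in> diagram lam"
    then show "1 \<le> i" "1 \<le> j" by (auto simp: diagram_def)
  next
    fix i j i' j' assume h: "(i,j) \<in> diagram lam" "1 \<le> i'" "1 \<le> j'" "i' \<le> i" "j' \<le> j"
    then have h2: "1 \<le> j" "j \<le> length lam" "i \<le> lam ! (j-1)" by (auto simp: diagram_def)
    have "lam ! (j-1) \<le> lam ! (j'-1)" using mono[OF h(3) h(5) h2(2)] .
    then show "(i',j') \<in> diagram lam" using h h2 by (auto simp: diagram_def)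
  qed
qed




definition ssyt :: "(nat\<times>nat) set \<Rightarrow> (nat \<times> nat \<Rightarrow> nat) \<Rightarrow> bool" where
  "ssyt D T \<longleftrightarrow>
     (\<forall>c. c \<notin> D \<longrightarrow> T c = 0) \<and>
     (\<forall>c\<in>D. 0 < T c) \<and>
     (\<forall>i i' j. (i, j) \<in> D \<longrightarrow> (i', j) \<in> D \<longrightarrow> i \<le> i' \<longrightarrow> T (i, j) \<le> T (i', j)) \<and>
     (\<forall>i j j'. (i, j) \<in> D \<longrightarrow> (i, j') \<in> D \<longrightarrow> j < j' \<longrightarrow> T (i, j) < T (i, j'))"

definition lcol :: "(nat\<times>nat) set \<Rightarrow> (nat \<times> nat \<Rightarrow> nat) \<Rightarrow> nat \<Rightarrow> nat" where
  "lcol D T k = Min {i. \<exists>j. (i, j) \<in> D \<and> T (i, j) = k}"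

definition qy :: "(nat\<times>nat) set \<Rightarrow> (nat \<times> nat \<Rightarrow> nat) \<Rightarrow> bool" where
  "qy D T \<longleftrightarrow> ssyt D T \<and>
     (\<forall>k\<in>T ` D. 1 < k \<longrightarrow> (\<exists>(i', j')\<in>D. T (i', j') = k - 1 \<and> lcol D T k \<le> i'))"

definition Q :: "(nat\<times>nat) set \<Rightarrow> int \<Rightarrow> (nat \<times> nat \<Rightarrow> nat) set" where
  "Q D m = {T. qy D T \<and> (\<exists>c\<in>D. int (T c) = m) \<and> (\<forall>c\<in>D. int (T c) \<le> m)}"

lemma QYT_eq_Q: "QYT_eq m lam = Q (diagram lam) m"
  unfolding QYT_eq_def Q_def quasi_yamanouchi_def qy_def is_SSYT_def ssyt_def leftmost_col_def lcol_def
  by simp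

definition syt :: "(nat\<times>nat) set \<Rightarrow> (nat \<times> nat \<Rightarrow> nat) \<Rightarrow> bool" where
  "syt D S \<longleftrightarrow> ssyt D S \<and> S ` D = {1..card D}"

definition pos :: "(nat\<times>nat) set \<Rightarrow> (nat \<times> nat \<Rightarrow> nat) \<Rightarrow> nat \<Rightarrow> nat \<times> nat" where
  "pos D S v = inv_into D S v"

definition des :: "(nat\<times>nat) set \<Rightarrow> (nat \<times> nat \<Rightarrow> nat) \<Rightarrow> nat set" where
  "des D S = {d. 1 \<le> d \<and> d < card D \<and> fst (pos D S (Suc d)) \<le> fst (pos D S d)}"

definition phi :: "(nat\<times>nat) set \<Rightarrow> (nat \<times> nat \<Rightarrow> nat) \<Rightarrow> (nat \<times> nat \<Rightarrow> nat)" where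
  "phi D S = (\<lambda>c. if c \<in> D then Suc (card {d\<in>des D S. d < S c}) else 0)"

definition key :: "(nat \<times> nat \<Rightarrow> nat) \<Rightarrow> nat \<times> nat \<Rightarrow> nat \<times> nat" where
  "key T c = (T c, fst c)"

definition std :: "(nat\<times>nat) set \<Rightarrow> (nat \<times> nat \<Rightarrow> nat) \<Rightarrow> (nat \<times> nat \<Rightarrow> nat)" where
  "std D T = (\<lambda>c. if c \<in> D then card {c'\<in>D. key T c' \<le> key T c} else 0)"

lemma rank_mono:
  fixes f :: "'a \<Rightarrow> 'b::linorder"
  assumes "finite A" "x\<in>A" "y\<in>A" "f x < f y"
  shows "card {z\<in>A. f z \<le> f x} < card {z\<in>A. f z \<le> f y}"
proof (rule psubset_card_mono)
  show "finite {z\<in>A. f z \<le> f y}" using assms by simp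
  have "y \<notin> {z\<in>A. f z \<le> f x}" using assms by auto
  moreover have "y \<in> {z\<in>A. f z \<le> f y}" using assms by auto
  moreover have "{z\<in>A. f z \<le> f x} \<subseteq> {z\<in>A. f z \<le> f y}" using assms by auto
  ultimately show "{z\<in>A. f z \<le> f x} \<subset> {z\<in>A. f z \<le> f y}" by blast
qed

lemma rank_image:
  fixes f :: "'a \<Rightarrow> 'b::linorder"
  assumes "finite A" "inj_on f A"
  shows "(\<lambda>x. card {z\<in>A. f z \<le> f x}) ` A = {1..card A}"
    and "inj_on (\<lambda>x. card {z\<in>A. f z \<le> f x}) A"
proof -
  let ?r = "\<lambda>x. card {z\<in>A. f z \<le> f x}"
  show inj: "inj_on ?r A"
  proof (rule inj_onI)
    fix x y assume xy: "x\<in>A" "y\<in>A" "?r x = ?r y"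
    show "x = y"
    proof (rule ccontr)
      assume "x \<noteq> y"
      then have "f x \<noteq> f y" using inj_onD[OF assms(2) _ xy(1) xy(2)] by blast
      then have "f x < f y \<or> f y < f x" by auto
      then show False using rank_mono[OF assms(1), of x y f] rank_mono[OF assms(1), of y x f] xy by auto
    qed
  qed
  have sub: "?r ` A \<subseteq> {1..card A}"
  proof
    fix r assume "r \<in> ?r ` A"
    then obtain x where x: "x\<in>A" "r = ?r x" by auto
    have "0 < ?r x" using x assms(1) by (subst card_gt_0_iff) auto
    moreover have "?r x \<le> card A" using assms(1) by (intro card_mono) auto
    ultimately show "r \<in> {1..card A}" using x by auto
  qed
  have "card (?r ` A) = card {1..card A}" using card_image[OF inj] by simp
  then show "?r ` A = {1..card A}" using sub by (intro card_subset_eq) auto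
qed

lemma ideal_finite: "ideal D \<Longrightarrow> finite D" unfolding ideal_def by (elim conjE)
lemma ideal_pos: "ideal D \<Longrightarrow> (i,j) \<in> D \<Longrightarrow> 1 \<le> i \<and> 1 \<le> j"
proof -
  assume a: "ideal D" "(i,j) \<in> D"
  have "\<forall>i j. (i,j)\<in>D \<longrightarrow> 1 \<le> i \<and> 1 \<le> j" using a(1) unfolding ideal_def by (elim conjE)
  then show ?thesis using a(2) by blast
qed
lemma ideal_down: "ideal D \<Longrightarrow> (i,j) \<in> D \<Longrightarrow> 1\<le>i' \<Longrightarrow> 1\<le>j' \<Longrightarrow> i'\<le>i \<Longrightarrow> j'\<le>j \<Longrightarrow> (i',j')\<in>D"
proof -
  assume a: "ideal D" "(i,j) \<in> D" "1\<le>i'" "1\<le>j'" "i'\<le>i" "j'\<le>j"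
  have "\<forall>i j i' j'. (i,j)\<in>D \<longrightarrow> 1\<le>i' \<longrightarrow> 1\<le>j' \<longrightarrow> i'\<le>i \<longrightarrow> j'\<le>j \<longrightarrow> (i',j')\<in>D"
    using a(1) unfolding ideal_def by (elim conjE)
  then show ?thesis using a(2-) by blast
qed

lemma ideal_swap: assumes I: "ideal D" shows "ideal (prod.swap ` D)"
  unfolding ideal_def
proof (intro conjI allI impI)
  show "finite (prod.swap ` D)" using ideal_finite[OF I] by simp
  fix i j assume "(i,j) \<in> prod.swap ` D"
  then have "(j,i) \<in> D" by (simp add: mem_swap)
  then show "1 \<le> i" "1 \<le> j" using ideal_pos[OF I] by auto
next
  fix i j i' j' assume h: "(i,j) \<in> prod.swap ` D" "1\<le>i'" "1\<le>j'" "i'\<le>i" "j'\<le>j"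
  then have "(j,i) \<in> D" by (simp add: mem_swap)
  then have "(j',i') \<in> D" using ideal_down[OF I _ h(3) h(2) h(5) h(4)] by simp
  then show "(i',j') \<in> prod.swap ` D" by (simp add: mem_swap)
qed

context
  fixes D S assumes I: "ideal D" and Y: "syt D S"
begin

lemma syt_ssyt: "ssyt D S" using Y by (simp add: syt_def)
lemma syt_img: "S ` D = {1..card D}" using Y by (simp add: syt_def)

lemma syt_inj: "inj_on S D"
proof (rule eq_card_imp_inj_on)
  show "finite D" using I by (rule ideal_finite)
  show "card (S ` D) = card D" using syt_img by simp
qed

lemma S_range: "c \<in> D \<Longrightarrow> 1 \<le> S c \<and> S c \<le> card D" using syt_img by auto

lemma pos_in: "1 \<le> v \<Longrightarrow> v \<le> card D \<Longrightarrow> pos D S v \<in> D \<and> S (pos D S v) = v"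
proof -
  assume "1 \<le> v" "v \<le> card D"
  then have "v \<in> S ` D" using syt_img by auto
  then show ?thesis using inv_into_into[of v S D] f_inv_into_f[of v S D] unfolding pos_def by simp
qed

lemma pos_S: "c \<in> D \<Longrightarrow> pos D S (S c) = c"
  unfolding pos_def by (simp add: syt_inj)

lemma S_out: "c \<notin> D \<Longrightarrow> S c = 0" using syt_ssyt unfolding ssyt_def by blast

lemma row_le: "(i,j)\<in>D \<Longrightarrow> (i',j)\<in>D \<Longrightarrow> i \<le> i' \<Longrightarrow> S (i,j) \<le> S (i',j)"
  using syt_ssyt by (simp add: ssyt_def)
lemma col_lt: "(i,j)\<in>D \<Longrightarrow> (i,j')\<in>D \<Longrightarrow> j < j' \<Longrightarrow> S (i,j) < S (i,j')"
  using syt_ssyt by (simp add: ssyt_def)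
lemma row_lt: "(i,j)\<in>D \<Longrightarrow> (i',j)\<in>D \<Longrightarrow> i < i' \<Longrightarrow> S (i,j) < S (i',j)"
proof -
  assume a: "(i,j)\<in>D" "(i',j)\<in>D" "i < i'"
  have "(i,j) \<noteq> (i',j)" using a(3) by simp
  then have "S (i,j) \<noteq> S (i',j)" using inj_onD[OF syt_inj _ a(1) a(2)] by blast
  then show ?thesis using row_le[OF a(1,2)] a(3) by simp
qed

lemma des_fin: "finite (des D S)"
proof (rule finite_subset[of _ "{..<card D}"])
  show "des D S \<subseteq> {..<card D}" unfolding des_def by auto
qed simp
lemma des_sub: "des D S \<subseteq> {1..<card D}" unfolding des_def by auto

lemma nodes_col:
  assumes "1 \<le> a" "a < b" "b \<le> card D" "\<forall>d. a \<le> d \<and> d < b \<longrightarrow> d \<notin> des D S"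
  shows "fst (pos D S a) < fst (pos D S b)"
  using assms
proof (induction b)
  case 0 then show ?case by simp
next
  case (Suc b)
  have ab: "a \<le> b" "1 \<le> b" "b < card D" using Suc.prems by auto
  have nd: "b \<notin> des D S" using Suc.prems(4) ab by auto
  then have st: "fst (pos D S b) < fst (pos D S (Suc b))" using ab unfolding des_def by auto
  show ?case
  proof (cases "a = b")
    case True then show ?thesis using st by simp
  next
    case False
    then have "fst (pos D S a) < fst (pos D S b)" using Suc.IH Suc.prems by auto
    then show ?thesis using st by simp
  qed
qed

lemma lemL:
  assumes "1 \<le> d" "d < card D"
  shows "fst (pos D S (Suc d)) \<le> fst (pos D S d) \<longleftrightarrow> snd (pos D S d) < snd (pos D S (Suc d))"
proof -
  obtain a0 b0 where p0: "pos D S d = (a0,b0)" by (cases "pos D S d") auto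
  obtain a1 b1 where p1: "pos D S (Suc d) = (a1,b1)" by (cases "pos D S (Suc d)") auto
  have c0: "(a0,b0) \<in> D" "S (a0,b0) = d" using pos_in[of d] assms p0 by auto
  have c1: "(a1,b1) \<in> D" "S (a1,b1) = Suc d" using pos_in[of "Suc d"] assms p1 by auto
  have "b0 < b1" if h: "a1 \<le> a0"
  proof (rule ccontr)
    assume "\<not> b0 < b1"
    then have "b1 \<le> b0" by simp
    have in1: "(a1,b0) \<in> D" using ideal_down[OF I c0(1), of a1 b0] ideal_pos[OF I c1(1)] ideal_pos[OF I c0(1)] h by auto
    have "S (a1,b1) \<le> S (a1,b0)" using col_lt[OF c1(1) in1] \<open>b1 \<le> b0\<close> by (cases "b1 = b0") auto
    also have "\<dots> \<le> S (a0,b0)" using row_le[OF in1 c0(1) h] .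
    finally show False using c0 c1 by simp
  qed
  moreover have "a1 \<le> a0" if h: "b0 < b1"
  proof (rule ccontr)
    assume "\<not> a1 \<le> a0"
    then have lt: "a0 < a1" by simp
    have in1: "(a0,b1) \<in> D" using ideal_down[OF I c1(1), of a0 b1] ideal_pos[OF I c1(1)] ideal_pos[OF I c0(1)] lt by auto
    have "S (a0,b0) < S (a0,b1)" using col_lt[OF c0(1) in1 h] .
    moreover have "S (a0,b1) < S (a1,b1)" using row_lt[OF in1 c1(1) lt] .
    ultimately show False using c0 c1 by simp
  qed
  ultimately show ?thesis using p0 p1 by auto
qed

end




context
  fixes D S assumes I: "ideal D" and Y: "syt D S"
begin

lemma g_mono: "v \<le> w \<Longrightarrow> card {d\<in>des D S. d < v} \<le> card {d\<in>des D S. d < w}"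
  by (rule card_mono) (use des_fin[OF I Y] in auto)

lemma g_strict: "v \<le> d \<Longrightarrow> d < w \<Longrightarrow> d \<in> des D S \<Longrightarrow> card {d\<in>des D S. d < v} < card {d\<in>des D S. d < w}"
proof (rule psubset_card_mono)
  assume a: "v \<le> d" "d < w" "d \<in> des D S"
  show "finite {d \<in> des D S. d < w}" using des_fin[OF I Y] by simp
  have "d \<notin> {d\<in>des D S. d < v}" "d \<in> {d\<in>des D S. d < w}" using a by auto
  moreover have "{d\<in>des D S. d < v} \<subseteq> {d\<in>des D S. d < w}" using a by auto
  ultimately show "{d\<in>des D S. d < v} \<subset> {d\<in>des D S. d < w}" by blast
qed

lemma g_eq_nodes:
  assumes "v \<le> w" "card {d\<in>des D S. d < v} = card {d\<in>des D S. d < w}"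
  shows "\<forall>d. v \<le> d \<and> d < w \<longrightarrow> d \<notin> des D S"
  using g_strict assms by fastforce

lemma phi_lt:
  assumes c: "c \<in> D" "c' \<in> D" "S c' < S c"
  shows "key (phi D S) c' < key (phi D S) c"
proof -
  have le: "card {d\<in>des D S. d < S c'} \<le> card {d\<in>des D S. d < S c}" using g_mono c by simp
  show ?thesis
  proof (cases "card {d\<in>des D S. d < S c'} = card {d\<in>des D S. d < S c}")
    case True
    have nd: "\<forall>d. S c' \<le> d \<and> d < S c \<longrightarrow> d \<notin> des D S" using g_eq_nodes[OF _ True] c by simp
    have "fst (pos D S (S c')) < fst (pos D S (S c))"
      using nodes_col[OF I Y _ c(3) _ nd] S_range[OF I Y] c by auto
    then have "fst c' < fst c" using pos_S[OF I Y] c by simp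
    then show ?thesis using True c by (simp add: key_def phi_def)
  next
    case False
    then show ?thesis using le c by (simp add: key_def phi_def)
  qed
qed

lemma std_phi: "std D (phi D S) = S"
proof
  fix c
  show "std D (phi D S) c = S c"
  proof (cases "c \<in> D")
    case False then show ?thesis by (simp add: std_def S_out[OF I Y])
  next
    case True
    have "{c'\<in>D. key (phi D S) c' \<le> key (phi D S) c} = {c'\<in>D. S c' \<le> S c}"
    proof (intro Collect_cong conj_cong refl)
      fix c' assume c': "c' \<in> D"
      show "key (phi D S) c' \<le> key (phi D S) c \<longleftrightarrow> S c' \<le> S c"
      proof (cases "S c' = S c")
        case True
        then have "c' = c" using syt_inj[OF I Y] c' \<open>c\<in>D\<close> by (meson inj_on_def)
        then show ?thesis by simp
      next
        case False
        then show ?thesis using phi_lt[OF \<open>c\<in>D\<close> c'] phi_lt[OF c' \<open>c\<in>D\<close>]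
          by (metis leD le_less linorder_neq_iff)
      qed
    qed
    moreover have "card {c'\<in>D. S c' \<le> S c} = S c"
    proof -
      have "S ` {c'\<in>D. S c' \<le> S c} = {1..S c}"
      proof
        show "S ` {c'\<in>D. S c' \<le> S c} \<subseteq> {1..S c}" using S_range[OF I Y] by auto
        show "{1..S c} \<subseteq> S ` {c'\<in>D. S c' \<le> S c}"
        proof
          fix x assume x: "x \<in> {1..S c}"
          then have "x \<in> S ` D" using syt_img[OF I Y] S_range[OF I Y True] by auto
          then obtain c' where "c' \<in> D" "x = S c'" by auto
          then show "x \<in> S ` {c'\<in>D. S c' \<le> S c}" using x by auto
        qed
      qed
      moreover have "inj_on S {c'\<in>D. S c' \<le> S c}" using syt_inj[OF I Y] by (rule inj_on_subset) auto
      ultimately show ?thesis by (metis card_atLeastAtMost card_image diff_Suc_1)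
    qed
    ultimately show ?thesis using True by (simp add: std_def)
  qed
qed

lemma phi_ssyt: "ssyt D (phi D S)"
proof -
  have a: "\<forall>c. c \<notin> D \<longrightarrow> phi D S c = 0" by (simp add: phi_def)
  have b: "\<forall>c\<in>D. 0 < phi D S c" by (simp add: phi_def)
  have c: "\<forall>i i' j. (i, j) \<in> D \<longrightarrow> (i', j) \<in> D \<longrightarrow> i \<le> i' \<longrightarrow> phi D S (i, j) \<le> phi D S (i', j)"
  proof (intro allI impI)
    fix i i' j assume h: "(i, j) \<in> D" "(i', j) \<in> D" "i \<le> i'"
    have "card {d\<in>des D S. d < S (i,j)} \<le> card {d\<in>des D S. d < S (i',j)}"
      using g_mono[OF row_le[OF I Y h]] .
    then show "phi D S (i, j) \<le> phi D S (i', j)" using h by (simp add: phi_def)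
  qed
  have d: "\<forall>i j j'. (i, j) \<in> D \<longrightarrow> (i, j') \<in> D \<longrightarrow> j < j' \<longrightarrow> phi D S (i, j) < phi D S (i, j')"
  proof (intro allI impI)
    fix i j j' assume h: "(i, j) \<in> D" "(i, j') \<in> D" "j < j'"
    have lt: "S (i,j) < S (i,j')" using col_lt[OF I Y h] .
    have "key (phi D S) (i,j) < key (phi D S) (i,j')" using phi_lt[OF h(2) h(1) lt] .
    then show "phi D S (i, j) < phi D S (i, j')" by (simp add: key_def)
  qed
  show ?thesis unfolding ssyt_def using a b c d by (intro conjI)
qed

lemma phi_qy: "qy D (phi D S)"
  unfolding qy_def
proof (intro conjI phi_ssyt ballI impI)
  fix k assume k: "k \<in> phi D S ` D" "1 < k"
  then obtain c where c: "c \<in> D" "k = phi D S c" by auto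
  define E where "E = {d\<in>des D S. d < S c}"
  have kE: "k = Suc (card E)" using c by (simp add: phi_def E_def)
  have finE: "finite E" using des_fin[OF I Y] by (simp add: E_def)
  have neE: "E \<noteq> {}" using kE k(2) by auto
  define d0 where "d0 = Max E"
  have d0E: "d0 \<in> E" using finE neE by (simp add: d0_def)
  have d0des: "d0 \<in> des D S" and d0c: "d0 < S c" using d0E by (auto simp: E_def)
  have d0r: "1 \<le> d0" "d0 < card D" using d0des des_sub[OF I Y] by auto
  have e1: "{d\<in>des D S. d < Suc d0} = E"
  proof
    show "{d\<in>des D S. d < Suc d0} \<subseteq> E" using d0c unfolding E_def by auto
    show "E \<subseteq> {d\<in>des D S. d < Suc d0}"
    proof
      fix d assume dE: "d \<in> E"
      then have "d \<le> d0" unfolding d0_def using finE by (rule Max_ge[rotated])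
      then show "d \<in> {d\<in>des D S. d < Suc d0}" using dE unfolding E_def by simp
    qed
  qed
  have e2: "{d\<in>des D S. d < d0} = E - {d0}"
    using e1 by auto
  obtain p1 where p1: "p1 = pos D S (Suc d0)" by simp
  obtain p0 where p0: "p0 = pos D S d0" by simp
  have p1D: "p1 \<in> D" "S p1 = Suc d0" using pos_in[OF I Y, of "Suc d0"] d0r p1 by auto
  have p0D: "p0 \<in> D" "S p0 = d0" using pos_in[OF I Y, of d0] d0r p0 by auto
  have phi1: "phi D S p1 = k" using p1D e1 kE by (simp add: phi_def)
  have cE: "0 < card E" using finE d0E card_gt_0_iff by blast
  have phi0: "phi D S p0 = k - 1" using p0D e2 kE finE d0E cE by (simp add: phi_def)
  have lc: "lcol D (phi D S) k \<le> fst p1"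
  proof -
    have fin: "finite {i. \<exists>j. (i, j) \<in> D \<and> phi D S (i, j) = k}"
    proof (rule finite_subset[of _ "fst ` D"])
      show "finite (fst ` D)" using ideal_finite[OF I] by simp
      show "{i. \<exists>j. (i, j) \<in> D \<and> phi D S (i, j) = k} \<subseteq> fst ` D"
      proof
        fix i assume "i \<in> {i. \<exists>j. (i, j) \<in> D \<and> phi D S (i, j) = k}"
        then obtain j where "(i,j) \<in> D" by auto
        then show "i \<in> fst ` D" by (rule image_eqI[rotated]) simp
      qed
    qed
    have "fst p1 \<in> {i. \<exists>j. (i, j) \<in> D \<and> phi D S (i, j) = k}" using p1D phi1 by (cases p1) auto
    then show ?thesis unfolding lcol_def using fin by simp
  qed
  have "fst p1 \<le> fst p0" using d0des p0 p1 by (simp add: des_def)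
  then show "\<exists>(i', j')\<in>D. phi D S (i', j') = k - 1 \<and> lcol D (phi D S) k \<le> i'"
    using p0D phi0 lc by (intro bexI[of _ p0]) (auto split: prod.splits)
qed

lemma phi_max:
  assumes "D \<noteq> {}"
  shows "phi D S (pos D S (card D)) = Suc (card (des D S))" "pos D S (card D) \<in> D"
    "\<And>c. c \<in> D \<Longrightarrow> phi D S c \<le> Suc (card (des D S))"
proof -
  have n: "1 \<le> card D" using assms ideal_finite[OF I] by (simp add: Suc_leI card_gt_0_iff)
  show pin: "pos D S (card D) \<in> D" using pos_in[OF I Y n] by simp
  have "{d\<in>des D S. d < card D} = des D S" using des_sub[OF I Y] by auto
  then show "phi D S (pos D S (card D)) = Suc (card (des D S))"
    using pos_in[OF I Y n] by (simp add: phi_def)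
  fix c assume "c \<in> D"
  have "card {d\<in>des D S. d < S c} \<le> card (des D S)" using des_fin[OF I Y] by (rule card_mono) auto
  then show "phi D S c \<le> Suc (card (des D S))" using \<open>c \<in> D\<close> by (simp add: phi_def)
qed

lemma phi_in_Q:
  assumes "D \<noteq> {}"
  shows "phi D S \<in> Q D (int (card (des D S)) + 1)"
proof -
  have "\<exists>c\<in>D. int (phi D S c) = int (card (des D S)) + 1"
    using phi_max(1,2)[OF assms] by (intro bexI[of _ "pos D S (card D)"]) auto
  moreover have "\<forall>c\<in>D. int (phi D S c) \<le> int (card (des D S)) + 1"
    using phi_max(3)[OF assms] by fastforce
  ultimately show ?thesis unfolding Q_def using phi_qy by blast
qed

end




context
  fixes D T m assumes I: "ideal D" and QT: "T \<in> Q D m"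
begin

lemma T_qy: "qy D T" using QT by (simp add: Q_def)
lemma T_ssyt: "ssyt D T" using T_qy by (simp add: qy_def)
lemma T_pos: "c \<in> D \<Longrightarrow> 0 < T c" using T_ssyt by (simp add: ssyt_def)
lemma T_out: "c \<notin> D \<Longrightarrow> T c = 0" using T_ssyt unfolding ssyt_def by blast
lemma T_rowle: "(i,j)\<in>D \<Longrightarrow> (i',j)\<in>D \<Longrightarrow> i \<le> i' \<Longrightarrow> T (i,j) \<le> T (i',j)"
  using T_ssyt by (simp add: ssyt_def)
lemma T_collt: "(i,j)\<in>D \<Longrightarrow> (i,j')\<in>D \<Longrightarrow> j < j' \<Longrightarrow> T (i,j) < T (i,j')"
  using T_ssyt by (simp add: ssyt_def)

lemma key_inj: "inj_on (key T) D"
proof (rule inj_onI)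
  fix c c' assume h: "c \<in> D" "c' \<in> D" "key T c = key T c'"
  obtain i j where c: "c = (i,j)" by fastforce
  obtain i' j' where c': "c' = (i',j')" by fastforce
  have "i = i'" "T (i,j) = T (i',j')" using h c c' by (auto simp: key_def)
  then show "c = c'" using T_collt h c c' by (metis less_irrefl nat_neq_iff)
qed

lemma fin: "finite D" using I by (rule ideal_finite)

lemma std_eq: "c \<in> D \<Longrightarrow> std D T c = card {z\<in>D. key T z \<le> key T c}" by (simp add: std_def)

lemma std_img: "std D T ` D = {1..card D}"
proof -
  have "std D T ` D = (\<lambda>x. card {z\<in>D. key T z \<le> key T x}) ` D" using std_eq by (rule image_cong[OF refl])
  then show ?thesis using rank_image(1)[OF fin key_inj] by simp
qed

lemma std_lt: "c \<in> D \<Longrightarrow> c' \<in> D \<Longrightarrow> key T c < key T c' \<Longrightarrow> std D T c < std D T c'"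
  using rank_mono[OF fin, of c c' "key T"] std_eq by simp

lemma std_lt_iff: "c \<in> D \<Longrightarrow> c' \<in> D \<Longrightarrow> std D T c < std D T c' \<longleftrightarrow> key T c < key T c'"
proof
  assume h: "c \<in> D" "c' \<in> D" "std D T c < std D T c'"
  show "key T c < key T c'"
  proof (rule ccontr)
    assume "\<not> key T c < key T c'"
    then have "key T c' < key T c \<or> key T c' = key T c" by auto
    then show False
    proof
      assume "key T c' < key T c"
      then show False using std_lt[OF h(2,1)] h(3) by simp
    next
      assume "key T c' = key T c"
      then have "c' = c" using inj_onD[OF key_inj _ h(2,1)] by blast
      then show False using h(3) by simp
    qed
  qed
next
  assume "c \<in> D" "c' \<in> D" "key T c < key T c'"
  then show "std D T c < std D T c'" by (rule std_lt)
qed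

lemma std_le_iff: "c \<in> D \<Longrightarrow> c' \<in> D \<Longrightarrow> std D T c \<le> std D T c' \<longleftrightarrow> key T c \<le> key T c'"
  using std_lt_iff by (meson not_le)

lemma std_syt: "syt D (std D T)"
proof -
  have a: "\<forall>c. c \<notin> D \<longrightarrow> std D T c = 0" by (simp add: std_def)
  have b: "\<forall>c\<in>D. 0 < std D T c"
  proof
    fix c assume "c \<in> D"
    then have "std D T c \<in> {1..card D}" using std_img by blast
    then show "0 < std D T c" by simp
  qed
  have c: "\<forall>i i' j. (i, j) \<in> D \<longrightarrow> (i', j) \<in> D \<longrightarrow> i \<le> i' \<longrightarrow> std D T (i, j) \<le> std D T (i', j)"
  proof (intro allI impI)
    fix i i' j assume h: "(i, j) \<in> D" "(i', j) \<in> D" "i \<le> i'"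
    have "key T (i,j) \<le> key T (i',j)" using T_rowle[OF h] h(3) by (simp add: key_def)
    then show "std D T (i, j) \<le> std D T (i', j)" using std_le_iff[OF h(1,2)] by simp
  qed
  have d: "\<forall>i j j'. (i, j) \<in> D \<longrightarrow> (i, j') \<in> D \<longrightarrow> j < j' \<longrightarrow> std D T (i, j) < std D T (i, j')"
  proof (intro allI impI)
    fix i j j' assume h: "(i, j) \<in> D" "(i, j') \<in> D" "j < j'"
    have "key T (i,j) < key T (i,j')" using T_collt[OF h] by (simp add: key_def)
    then show "std D T (i, j) < std D T (i, j')" using std_lt_iff[OF h(1,2)] by simp
  qed
  have "ssyt D (std D T)" unfolding ssyt_def using a b c d by (intro conjI)
  then show ?thesis unfolding syt_def using std_img by simp
qed

abbreviation "S \<equiv> std D T"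

definition cm where "cm = (SOME c. c \<in> D \<and> int (T c) = m)"
lemma cm: "cm \<in> D" "int (T cm) = m"
  using QT someI_ex[of "\<lambda>c. c \<in> D \<and> int (T c) = m"] by (auto simp: Q_def cm_def)
lemma T_le: "c \<in> D \<Longrightarrow> T c \<le> T cm"
proof -
  assume c: "c \<in> D"
  have "\<forall>c\<in>D. int (T c) \<le> m" using QT unfolding Q_def by blast
  then have "int (T c) \<le> m" using c by blast
  then show ?thesis using cm(2) by linarith
qed

lemma all_vals_aux: "j < T cm \<Longrightarrow> T cm - j \<in> T ` D"
proof (induction j)
  case 0 then show ?case using cm by auto
next
  case (Suc j)
  then have inn: "T cm - j \<in> T ` D" by simp
  have gt: "1 < T cm - j" using Suc.prems by simp
  have "\<forall>k\<in>T ` D. 1 < k \<longrightarrow> (\<exists>(i', j')\<in>D. T (i', j') = k - 1 \<and> lcol D T k \<le> i')"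
    using T_qy unfolding qy_def by blast
  then have "\<exists>(i', j')\<in>D. T (i', j') = T cm - j - 1 \<and> lcol D T (T cm - j) \<le> i'"
    using inn gt by blast
  then obtain c where "c \<in> D" "T c = T cm - j - 1" by auto
  moreover have "T cm - j - 1 = T cm - Suc j" by simp
  ultimately show ?case by (metis image_eqI)
qed

lemma all_vals: "1 \<le> k \<Longrightarrow> k \<le> T cm \<Longrightarrow> k \<in> T ` D"
proof -
  assume k: "1 \<le> k" "k \<le> T cm"
  then have "T cm - k < T cm" by simp
  then have "T cm - (T cm - k) \<in> T ` D" by (rule all_vals_aux)
  moreover have "T cm - (T cm - k) = k" using k by simp
  ultimately show ?thesis by simp
qed

lemma step:
  assumes v: "1 \<le> v" "v < card D"
  shows "(T (pos D S (Suc v)) = T (pos D S v) \<and> v \<notin> des D S) \<or>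
         (T (pos D S (Suc v)) = Suc (T (pos D S v)) \<and> v \<in> des D S)"
proof -
  define c0 where "c0 = pos D S v"
  define c1 where "c1 = pos D S (Suc v)"
  have c0: "c0 \<in> D" "S c0 = v" using pos_in[OF I std_syt, of v] v by (auto simp: c0_def)
  have c1: "c1 \<in> D" "S c1 = Suc v" using pos_in[OF I std_syt, of "Suc v"] v by (auto simp: c1_def)
  have k01: "key T c0 < key T c1" using std_lt_iff[OF c0(1) c1(1)] c0 c1 by simp
  then have le: "T c0 \<le> T c1" by (auto simp: key_def)
  have le2: "T c1 \<le> Suc (T c0)"
  proof (rule ccontr)
    assume "\<not> T c1 \<le> Suc (T c0)"
    then have "Suc (T c0) \<le> T cm" using T_le[OF c1(1)] by simp
    then have "Suc (T c0) \<in> T ` D" using all_vals[of "Suc (T c0)"] by simp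
    then obtain c where c: "c \<in> D" "T c = Suc (T c0)" by (metis imageE)
    have "key T c0 < key T c" "key T c < key T c1" using c \<open>\<not> T c1 \<le> Suc (T c0)\<close> by (auto simp: key_def)
    then have "v < S c" "S c < Suc v" using std_lt_iff[OF c0(1) c(1)] std_lt_iff[OF c(1) c1(1)] c0 c1 by simp_all
    then show False by simp
  qed
  show ?thesis
  proof (cases "T c1 = T c0")
    case True
    then have "fst c0 < fst c1" using k01 by (auto simp: key_def)
    then have "v \<notin> des D S" by (auto simp: des_def c0_def c1_def)
    then show ?thesis using True c0_def c1_def by simp
  next
    case False
    then have k: "T c1 = Suc (T c0)" using le le2 by simp
    have "1 < T c1" using k T_pos[OF c0(1)] by simp
    have "\<forall>k\<in>T ` D. 1 < k \<longrightarrow> (\<exists>(i', j')\<in>D. T (i', j') = k - 1 \<and> lcol D T k \<le> i')"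
      using T_qy unfolding qy_def by blast
    then have "\<exists>(i', j')\<in>D. T (i', j') = T c1 - 1 \<and> lcol D T (T c1) \<le> i'"
      using c1(1) \<open>1 < T c1\<close> by blast
    then obtain i' j' where ij: "(i',j') \<in> D" "T (i',j') = T c1 - 1" "lcol D T (T c1) \<le> i'"
      by blast
    have lc: "fst c1 \<le> lcol D T (T c1)"
      unfolding lcol_def
    proof (rule Min.boundedI)
      show "finite {i. \<exists>j. (i, j) \<in> D \<and> T (i, j) = T c1}"
      proof (rule finite_subset[of _ "fst ` D"])
        show "finite (fst ` D)" using fin by simp
        show "{i. \<exists>j. (i, j) \<in> D \<and> T (i, j) = T c1} \<subseteq> fst ` D"
        proof
          fix i assume "i \<in> {i. \<exists>j. (i, j) \<in> D \<and> T (i, j) = T c1}"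
          then obtain j where "(i,j) \<in> D" by auto
          then show "i \<in> fst ` D" by (rule image_eqI[rotated]) simp
        qed
      qed
      show "{i. \<exists>j. (i, j) \<in> D \<and> T (i, j) = T c1} \<noteq> {}"
      proof -
        have "fst c1 \<in> {i. \<exists>j. (i, j) \<in> D \<and> T (i, j) = T c1}" using c1(1) by (cases c1) auto
        then show ?thesis by blast
      qed
      fix a assume "a \<in> {i. \<exists>j. (i, j) \<in> D \<and> T (i, j) = T c1}"
      then obtain j where aj: "(a,j) \<in> D" "T (a,j) = T c1" by auto
      have "key T c0 < key T (a,j)" using aj k by (simp add: key_def)
      then have "v < S (a,j)" using std_lt_iff[OF c0(1) aj(1)] c0 by simp
      then have "S c1 \<le> S (a,j)" using c1 by simp
      then have "key T c1 \<le> key T (a,j)" using std_le_iff[OF c1(1) aj(1)] by simp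
      then show "fst c1 \<le> a" using aj by (simp add: key_def)
    qed
    have "key T (i',j') < key T c1" using ij k by (simp add: key_def)
    then have "S (i',j') < Suc v" using std_lt_iff[OF ij(1) c1(1)] c1 by simp
    then have "S (i',j') \<le> S c0" using c0 by simp
    then have "key T (i',j') \<le> key T c0" using std_le_iff[OF ij(1) c0(1)] by simp
    then have "i' \<le> fst c0" using ij k by (simp add: key_def)
    then have "fst c1 \<le> fst c0" using lc ij by simp
    then have "v \<in> des D S" using v by (simp add: des_def c0_def c1_def)
    then show ?thesis using k c0_def c1_def by simp
  qed
qed

lemma Dne: "D \<noteq> {}" using cm by auto
lemma n1: "1 \<le> card D" using Dne fin by (simp add: Suc_leI card_gt_0_iff)

lemma first: "T (pos D S 1) = 1"
proof -
  have p: "pos D S 1 \<in> D" "S (pos D S 1) = 1" using pos_in[OF I std_syt, of 1] n1 by auto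
  have "1 \<le> T cm" using T_pos[OF cm(1)] by simp
  then have "1 \<in> T ` D" using all_vals[of 1] by simp
  then obtain c where c: "c \<in> D" "T c = 1" by (metis imageE)
  have "S (pos D S 1) \<le> S c" using p std_img c by fastforce
  then have "key T (pos D S 1) \<le> key T c" using std_le_iff[OF p(1) c(1)] by simp
  then have "T (pos D S 1) \<le> 1" using c by (auto simp: key_def)
  then show ?thesis using T_pos[OF p(1)] by simp
qed

lemma Tpos: "1 \<le> v \<Longrightarrow> v \<le> card D \<Longrightarrow> T (pos D S v) = Suc (card {d\<in>des D S. d < v})"
proof (induction v)
  case 0 then show ?case by simp
next
  case (Suc v)
  show ?case
  proof (cases "v = 0")
    case True
    have "{d\<in>des D S. d < 1} = {}" by (auto simp: des_def)
    then show ?thesis using True first by simp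
  next
    case False
    then have v: "1 \<le> v" "v < card D" using Suc.prems by auto
    have IH: "T (pos D S v) = Suc (card {d\<in>des D S. d < v})" using Suc.IH v by simp
    have fin': "finite (des D S)" using des_fin[OF I std_syt] .
    show ?thesis
    proof (cases "v \<in> des D S")
      case True
      have "{d\<in>des D S. d < Suc v} = insert v {d\<in>des D S. d < v}" using True by auto
      then have "card {d\<in>des D S. d < Suc v} = Suc (card {d\<in>des D S. d < v})" using fin' by simp
      then show ?thesis using step[OF v] True IH by auto
    next
      case False
      have "{d\<in>des D S. d < Suc v} = {d\<in>des D S. d < v}" using False less_Suc_eq by auto
      then show ?thesis using step[OF v] False IH by auto
    qed
  qed
qed

lemma phi_std: "phi D S = T"
proof
  fix c show "phi D S c = T c"
  proof (cases "c \<in> D")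
    case False then show ?thesis by (simp add: phi_def T_out)
  next
    case True
    have r: "1 \<le> S c" "S c \<le> card D" using S_range[OF I std_syt True] by auto
    show ?thesis using Tpos[OF r] pos_S[OF I std_syt True] True by (simp add: phi_def)
  qed
qed

lemma std_des: "int (card (des D S)) + 1 = m"
proof -
  have p: "pos D S (card D) \<in> D" "S (pos D S (card D)) = card D" using pos_in[OF I std_syt, of "card D"] n1 by auto
  have "{d\<in>des D S. d < card D} = des D S" using des_sub[OF I std_syt] by auto
  then have e: "T (pos D S (card D)) = Suc (card (des D S))" using Tpos[of "card D"] n1 by simp
  have "S cm \<le> S (pos D S (card D))" using p std_img cm by fastforce
  then have "key T cm \<le> key T (pos D S (card D))" using std_le_iff[OF cm(1) p(1)] by simp
  then have "T cm \<le> T (pos D S (card D))" by (auto simp: key_def)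
  then have "T (pos D S (card D)) = T cm" using T_le[OF p(1)] by simp
  then show ?thesis using e cm by simp
qed

end




lemma swap_swap_img: "prod.swap ` prod.swap ` D = D"
  by (simp add: image_comp)

lemma card_swap: "card (prod.swap ` D) = card D"
  by (rule card_image) simp

context
  fixes D S assumes I: "ideal D" and Y: "syt D S"
begin

lemma syt_swap: "syt (prod.swap ` D) (S \<circ> prod.swap)"
proof -
  let ?D = "prod.swap ` D" and ?S = "S \<circ> prod.swap"
  have a: "\<forall>c. c \<notin> ?D \<longrightarrow> ?S c = 0"
  proof (intro allI impI)
    fix c assume "c \<notin> ?D"
    then have "prod.swap c \<notin> D" by (metis image_eqI swap_swap)
    then show "?S c = 0" using S_out[OF I Y] by simp
  qed
  have b: "\<forall>c\<in>?D. 0 < ?S c"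
  proof
    fix c assume "c \<in> ?D"
    then have "prod.swap c \<in> D" by auto
    then show "0 < ?S c" using S_range[OF I Y] by fastforce
  qed
  have c: "\<forall>i i' j. (i, j) \<in> ?D \<longrightarrow> (i', j) \<in> ?D \<longrightarrow> i \<le> i' \<longrightarrow> ?S (i, j) \<le> ?S (i', j)"
  proof (intro allI impI)
    fix i i' j assume h: "(i, j) \<in> ?D" "(i', j) \<in> ?D" "i \<le> i'"
    have h1: "(j,i) \<in> D" "(j,i') \<in> D" using h(1,2) by (simp_all add: mem_swap)
    show "?S (i, j) \<le> ?S (i', j)"
    proof (cases "i = i'")
      case True then show ?thesis by simp
    next
      case False
      then have "i < i'" using h(3) by simp
      then show ?thesis using col_lt[OF I Y h1] by simp
    qed
  qed
  have d: "\<forall>i j j'. (i, j) \<in> ?D \<longrightarrow> (i, j') \<in> ?D \<longrightarrow> j < j' \<longrightarrow> ?S (i, j) < ?S (i, j')"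
  proof (intro allI impI)
    fix i j j' assume h: "(i, j) \<in> ?D" "(i, j') \<in> ?D" "j < j'"
    have h1: "(j,i) \<in> D" "(j',i) \<in> D" using h(1,2) by (simp_all add: mem_swap)
    show "?S (i, j) < ?S (i, j')" using row_lt[OF I Y h1 h(3)] by simp
  qed
  have "ssyt ?D ?S" unfolding ssyt_def using a b c d by (intro conjI)
  moreover have "?S ` ?D = S ` D" by (simp add: image_comp)
  ultimately show ?thesis unfolding syt_def using syt_img[OF I Y] card_swap[of D] by simp
qed

lemma pos_swap:
  assumes "1 \<le> v" "v \<le> card D"
  shows "pos (prod.swap ` D) (S \<circ> prod.swap) v = prod.swap (pos D S v)"
proof -
  have p: "pos D S v \<in> D" "S (pos D S v) = v" using pos_in[OF I Y assms] by auto
  have "prod.swap (pos D S v) \<in> prod.swap ` D" using p(1) by simp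
  then have "pos (prod.swap ` D) (S \<circ> prod.swap) ((S \<circ> prod.swap) (prod.swap (pos D S v))) = prod.swap (pos D S v)"
    by (rule pos_S[OF ideal_swap[OF I] syt_swap])
  then show ?thesis using p(2) by simp
qed

lemma des_swap: "des (prod.swap ` D) (S \<circ> prod.swap) = {1..<card D} - des D S"
proof (rule set_eqI)
  fix d
  show "d \<in> des (prod.swap ` D) (S \<circ> prod.swap) \<longleftrightarrow> d \<in> {1..<card D} - des D S"
  proof (cases "1 \<le> d \<and> d < card D")
    case True
    have e1: "pos (prod.swap ` D) (S \<circ> prod.swap) d = prod.swap (pos D S d)" using pos_swap True by simp
    have e2: "pos (prod.swap ` D) (S \<circ> prod.swap) (Suc d) = prod.swap (pos D S (Suc d))" using pos_swap True by simp
    have "d \<in> des (prod.swap ` D) (S \<circ> prod.swap) \<longleftrightarrow> snd (pos D S (Suc d)) \<le> snd (pos D S d)"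
      using True unfolding des_def card_swap by (simp add: e1 e2)
    also have "\<dots> \<longleftrightarrow> \<not> fst (pos D S (Suc d)) \<le> fst (pos D S d)"
      using lemL[OF I Y, of d] True by auto
    also have "\<dots> \<longleftrightarrow> d \<in> {1..<card D} - des D S" using True unfolding des_def by auto
    finally show ?thesis .
  next
    case False
    then show ?thesis unfolding des_def card_swap by auto
  qed
qed

lemma card_des_swap: "card (des (prod.swap ` D) (S \<circ> prod.swap)) = (card D - 1) - card (des D S)"
proof -
  have "card ({1..<card D} - des D S) = card {1..<card D} - card (des D S)"
    using des_sub[OF I Y] by (intro card_Diff_subset) (auto intro: finite_subset)
  then show ?thesis using des_swap by simp
qed

lemma card_des_le: "card (des D S) \<le> card D - 1"
  using card_mono[OF _ des_sub[OF I Y]] by simp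

end

lemma bij_phi:
  assumes I: "ideal D" and ne: "D \<noteq> {}"
  shows "card (Q D m) = card {S. syt D S \<and> int (card (des D S)) + 1 = m}"
proof -
  have "bij_betw (phi D) {S. syt D S \<and> int (card (des D S)) + 1 = m} (Q D m)"
  proof (rule bij_betw_byWitness[where f' = "std D"])
    show "\<forall>a\<in>{S. syt D S \<and> int (card (des D S)) + 1 = m}. std D (phi D a) = a"
      using std_phi[OF I] by blast
    show "\<forall>a'\<in>Q D m. phi D (std D a') = a'"
      using phi_std[OF I] by blast
    show "phi D ` {S. syt D S \<and> int (card (des D S)) + 1 = m} \<subseteq> Q D m"
      using phi_in_Q[OF I _ ne] by blast
    show "std D ` Q D m \<subseteq> {S. syt D S \<and> int (card (des D S)) + 1 = m}"
      using std_syt[OF I] std_des[OF I] by blast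
  qed
  then show ?thesis by (simp add: bij_betw_same_card)
qed

lemma Q_empty: "Q {} m = {}" by (simp add: Q_def)

lemma main_abstract:
  assumes I: "ideal D"
  shows "card (Q D m) = card (Q (prod.swap ` D) (int (card D) + 1 - m))"
proof (cases "D = {}")
  case True then show ?thesis by (simp add: Q_empty)
next
  case False
  let ?D = "prod.swap ` D"
  let ?n = "card D"
  have I': "ideal ?D" using ideal_swap[OF I] .
  have ne': "?D \<noteq> {}" using False by simp
  have n1: "1 \<le> ?n" using False ideal_finite[OF I] by (simp add: Suc_leI card_gt_0_iff)
  let ?A = "{S. syt D S \<and> int (card (des D S)) + 1 = m}"
  let ?B = "{S. syt ?D S \<and> int (card (des ?D S)) + 1 = int ?n + 1 - m}"
  have "bij_betw (\<lambda>S. S \<circ> prod.swap) ?A ?B"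
  proof (rule bij_betw_byWitness[where f' = "\<lambda>S. S \<circ> prod.swap"])
    show "\<forall>a\<in>?A. a \<circ> prod.swap \<circ> prod.swap = a" by (auto simp: comp_def)
    show "\<forall>a\<in>?B. a \<circ> prod.swap \<circ> prod.swap = a" by (auto simp: comp_def)
    show "(\<lambda>S. S \<circ> prod.swap) ` ?A \<subseteq> ?B"
    proof
      fix S' assume "S' \<in> (\<lambda>S. S \<circ> prod.swap) ` ?A"
      then obtain S where S: "syt D S" "int (card (des D S)) + 1 = m" "S' = S \<circ> prod.swap" by auto
      have "card (des ?D S') = (?n - 1) - card (des D S)" using card_des_swap[OF I S(1)] S(3) by simp
      moreover have "card (des D S) \<le> ?n - 1" using card_des_le[OF I S(1)] .
      ultimately have "int (card (des ?D S')) + 1 = int ?n + 1 - m" using S(2) n1 by linarith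
      then show "S' \<in> ?B" using syt_swap[OF I S(1)] S(3) by simp
    qed
    show "(\<lambda>S. S \<circ> prod.swap) ` ?B \<subseteq> ?A"
    proof
      fix S' assume "S' \<in> (\<lambda>S. S \<circ> prod.swap) ` ?B"
      then obtain S where S: "syt ?D S" "int (card (des ?D S)) + 1 = int ?n + 1 - m" "S' = S \<circ> prod.swap" by auto
      have e: "prod.swap ` ?D = D" by (rule swap_swap_img)
      have "card (des D S') = (card ?D - 1) - card (des ?D S)" using card_des_swap[OF I' S(1)] S(3) e by simp
      moreover have "card (des ?D S) \<le> card ?D - 1" using card_des_le[OF I' S(1)] .
      moreover have "card ?D = ?n" by (rule card_swap)
      ultimately have "int (card (des D S')) + 1 = m" using S(2) n1 by linarith
      moreover have "syt D S'" using syt_swap[OF I' S(1)] S(3) e by simp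
      ultimately show "S' \<in> ?A" by simp
    qed
  qed
  then have "card ?A = card ?B" by (rule bij_betw_same_card)
  then show ?thesis using bij_phi[OF I False, of m] bij_phi[OF I' ne', of "int ?n + 1 - m"] card_swap[of D] by simp
qed

theorem theorem3p3:
  fixes lam :: "nat list" and n :: nat and m :: int
  assumes "partition_of lam n"
  shows "card (QYT_eq m lam) = card (QYT_eq (int n + 1 - m) (conj_part lam))"
proof -
  have p: "is_partition lam" "sum_list lam = n" using assms by (auto simp: partition_of_def)
  have I: "ideal (diagram lam)" using ideal_diagram[OF p(1)] .
  have c: "card (diagram lam) = n" using diagram_finite_card[of lam] p(2) by simp
  show ?thesis
    unfolding QYT_eq_Q diagram_conj[OF p(1)] using main_abstract[OF I, of m] c by simp
qed


end
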